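(* Let $S=\mathbb{Z}_s$ and let $\mathcal{P}_0$ be a plan for an $s^t$ experiment on $b$ blocks of size $k$, with factor set $\mathcal{F}_0$. Suppose an orthogonal array $OA(N,m-1,s,2)$ exists and let $Q=Q(N,m,s)$ be the $N\times m$ array obtained by adjoining to it an all-zero column, placed as column $0$; index the columns of $Q$ by $0,1,\dots,m-1$. Then the plan $\mathcal{P}=Q\Diamond\mathcal{P}_0$ is a plan with $mt$ factors $\{P_i: P\in\mathcal{F}_0,\ 0\le i\le m-1\}$ on $bN$ blocks of size $k$, and: (a) for $P\neq Q'$ in $\mathcal{F}_0$, $P_i\perp_{bl}Q'_i$ in $\mathcal{P}$ for every $i$, $0\le i\le m-1$, if and only if $P\perp_{bl}Q'$ in $\mathcal{P}_0$; (b) $P_i\perp_{bl}Q'_j$ in $\mathcal{P}$ for all $P,Q'\in\mathcal{F}_0$ and all $i\ne j$, $0\le i,j\le m-1$.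
   Context: A plan for an $s^m$ experiment on $b$ blocks of size $k$: factors, each with level set $S=\mathbb{Z}_s$; a run is a vector of levels, one per factor; the plan is a collection of $b$ blocks, each a multiset of $k$ runs. For factors $A,A'$, $N_{AA'}$ is the $s\times s$ matrix whose $(p,q)$ entry is the number of runs (with multiplicity) in which $A$ is at level $p$ and $A'$ at level $q$; $L_A$ is the $s\times b$ matrix whose $(p,l)$ entry is the number of runs of block $l$ in which $A$ is at level $p$. $A\perp_{bl}A'$ (OTB) means $kN_{AA'}=L_AL_{A'}^T$. An orthogonal array $OA(N,n,s,2)$ is an $N\times n$ array with entries in $S$ such that in any two columns every ordered pair of symbols appears as a row exactly $N/s^2$ times. Construction $H\Diamond\mathcal{P}_0$: let $\mathcal{P}_0$ have $t$ factors $\mathcal{F}_0$, and let $H=(h_{ij})$ be a $p\times q$ array over $S$ with columns indexed by $j$. First form $\mathcal{P}_0^q$: the plan on the same blocks whose run in position $r$ of block $l$ is the concatenation of $q$ copies of the corresponding run of $\mathcal{P}_0$; its factors are $P_j$, $P\in\mathcal{F}_0$, $j$ ranging over column indices of $H$ ($P_j$ being factor $P$ in copy $j$). For each row $i$ of $H$ let $v_i\in S^{tq}$ be the vector that equals $h_{ij}$ in all $t$ coordinates of copy $j$. Then $H\Diamond\mathcal{P}_0$ is the plan whose blocks are $B+v_i$ for all blocks $B$ of $\mathcal{P}_0^q$ and all rows $i$ of $H$, where $B+v=\{x+v:x\in B\}$ with coordinatewise addition mod $s$. *)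

theory Defs
  imports "HOL-Library.Multiset"
begin

text \<open>Levels are the naturals 0..s-1 representing Z_s; a run is a function from
  factors to levels; a block is a multiset of runs; a plan is a list of blocks
  (the list index is the block label l).\<close>

type_synonym ('f) run = "'f \<Rightarrow> nat"
type_synonym ('f) plan = "('f run) multiset list"

definition is_plan :: "nat \<Rightarrow> 'f set \<Rightarrow> nat \<Rightarrow> nat \<Rightarrow> 'f plan \<Rightarrow> bool" where
  "is_plan s F b k P \<longleftrightarrow> length P = b \<and>
     (\<forall>B\<in>set P. size B = k \<and> (\<forall>x\<in>#B. \<forall>A\<in>F. x A < s))"

definition Nmat :: "'f plan \<Rightarrow> 'f \<Rightarrow> 'f \<Rightarrow> nat \<Rightarrow> nat \<Rightarrow> nat" where
  "Nmat P A A' p q = sum_list (map (\<lambda>B. size (filter_mset (\<lambda>x. x A = p \<and> x A' = q) B)) P)"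

definition Lmat :: "'f plan \<Rightarrow> 'f \<Rightarrow> nat \<Rightarrow> nat \<Rightarrow> nat" where
  "Lmat P A p l = size (filter_mset (\<lambda>x. x A = p) (P ! l))"

text \<open>Orthogonality through the block factor: k N_{AA'} = L_A L_{A'}^T (as s x s matrices).\<close>
definition OTB :: "nat \<Rightarrow> nat \<Rightarrow> 'f plan \<Rightarrow> 'f \<Rightarrow> 'f \<Rightarrow> bool" where
  "OTB s k P A A' \<longleftrightarrow> (\<forall>p<s. \<forall>q<s.
     k * Nmat P A A' p q = (\<Sum>l<length P. Lmat P A p l * Lmat P A' q l))"

text \<open>N > 0 (positive index); for the degenerate case n = 1 we also require the
  (for n >= 2 implied) strength-1 balance of each column: every symbol occurs N/s times.\<close>
definition is_OA :: "nat \<Rightarrow> nat \<Rightarrow> nat \<Rightarrow> (nat \<Rightarrow> nat \<Rightarrow> nat) \<Rightarrow> bool" where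
  "is_OA N n s H \<longleftrightarrow> 0 < N \<and> (\<forall>i<N. \<forall>j<n. H i j < s) \<and>
     (\<forall>j<n. \<forall>p<s. card {i. i < N \<and> H i j = p} * s = N) \<and>
     (\<forall>j1<n. \<forall>j2<n. j1 \<noteq> j2 \<longrightarrow> (\<forall>p<s. \<forall>q<s.
        card {i. i < N \<and> H i j1 = p \<and> H i j2 = q} * s^2 = N))"

definition Qarr :: "(nat \<Rightarrow> nat \<Rightarrow> nat) \<Rightarrow> nat \<Rightarrow> nat \<Rightarrow> nat" where
  "Qarr H i j = (if j = 0 then 0 else H i (j - 1))"

text \<open>H \<diamond> P0 for a p x q array H: factor (P,j) is factor P in copy j; block B + v_i
  for each row i and each block B of P0^q.  Values at (P,j) with j >= q are
  irrelevant (set to 0).\<close>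
definition diamond :: "nat \<Rightarrow> (nat \<Rightarrow> nat \<Rightarrow> nat) \<Rightarrow> nat \<Rightarrow> nat \<Rightarrow> 'f plan \<Rightarrow> ('f \<times> nat) plan" where
  "diamond s H p q P0 = concat (map (\<lambda>i. map (\<lambda>B.
      image_mset (\<lambda>x. (\<lambda>(A, j). if j < q then (x A + H i j) mod s else 0)) B) P0) [0..<p])"

end

theory Submission
  imports Defs
begin

lemma size_filter_sum: "size (filter_mset f M) = (\<Sum>x\<in>#M. if f x then 1 else (0::nat))"
  by (induction M) auto

lemma sum_list_map_nth: "sum_list (map h xs) = (\<Sum>i<length xs. h (xs ! i))"
  by (simp add: sum_list_sum_nth atLeast0LessThan)

lemma sum_list_concat_upt: "sum_list (map h (concat (map g [0..<N]))) = (\<Sum>r<N. sum_list (map h (g r)))"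
  by (induction N) auto

definition shf :: "'f run \<Rightarrow> nat \<Rightarrow> (nat \<Rightarrow> nat \<Rightarrow> nat) \<Rightarrow> nat \<Rightarrow> nat \<Rightarrow> ('f \<times> nat) run" where
  "shf x m G s r = (\<lambda>(A, j). if j < m then (x A + G r j) mod s else 0)"

lemma sum_list_diamond:
  "sum_list (map h (diamond s G N m P0)) = (\<Sum>r<N. \<Sum>l<length P0. h (image_mset (\<lambda>x. shf x m G s r) (P0 ! l)))"
  unfolding diamond_def shf_def sum_list_concat_upt
  by (simp add: sum_list_map_nth)

lemma length_diamond: "length (diamond s G N m P0) = N * length P0"
  unfolding diamond_def by (induction N) auto

lemma modeq: assumes "a < s" "h < (s::nat)" "p < s"
  shows "((a + h) mod s = p) \<longleftrightarrow> a = (p + s - h) mod s"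
    and "((a + h) mod s = p) \<longleftrightarrow> h = (p + s - a) mod s"
proof -
  have e: "(a + h) mod s = (if a + h < s then a + h else a + h - s)"
    using assms by (simp add: mod_if le_mod_geq)
  have e2: "(p + s - h) mod s = (if p + s - h < s then p + s - h else p - h)"
    using assms by (simp add: mod_if le_mod_geq)
  have e3: "(p + s - a) mod s = (if p + s - a < s then p + s - a else p - a)"
    using assms by (simp add: mod_if le_mod_geq)
  show "((a + h) mod s = p) \<longleftrightarrow> a = (p + s - h) mod s"
    unfolding e e2 using assms by auto
  show "((a + h) mod s = p) \<longleftrightarrow> h = (p + s - a) mod s"
    unfolding e e3 using assms by auto
qed


lemma filt_shift:
  assumes "\<forall>x\<in>#B. x P < s \<and> x Q < s" "i < m" "j < m" "G r i < s" "G r j < s" "p < s" "q < s"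
  shows "filter_mset (\<lambda>x. x (P, i) = p \<and> x (Q, j) = q) (image_mset (\<lambda>x. shf x m G s r) B)
     = image_mset (\<lambda>x. shf x m G s r) (filter_mset (\<lambda>x. x P = (p + s - G r i) mod s \<and> x Q = (q + s - G r j) mod s) B)"
    and "filter_mset (\<lambda>x. x (P, i) = p) (image_mset (\<lambda>x. shf x m G s r) B)
     = image_mset (\<lambda>x. shf x m G s r) (filter_mset (\<lambda>x. x P = (p + s - G r i) mod s) B)"
    and "filter_mset (\<lambda>x. x (Q, j) = q) (image_mset (\<lambda>x. shf x m G s r) B)
     = image_mset (\<lambda>x. shf x m G s r) (filter_mset (\<lambda>x. x Q = (q + s - G r j) mod s) B)"
proof -
  have e1: "\<And>x. x\<in>#B \<Longrightarrow> (shf x m G s r (P,i) = p) = (x P = (p + s - G r i) mod s)"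
  proof -
    fix x assume "x \<in># B"
    then show "(shf x m G s r (P,i) = p) = (x P = (p + s - G r i) mod s)"
      using modeq(1)[of "x P" s "G r i" p] assms by (simp add: shf_def)
  qed
  have e2: "\<And>x. x\<in>#B \<Longrightarrow> (shf x m G s r (Q,j) = q) = (x Q = (q + s - G r j) mod s)"
  proof -
    fix x assume "x \<in># B"
    then show "(shf x m G s r (Q,j) = q) = (x Q = (q + s - G r j) mod s)"
      using modeq(1)[of "x Q" s "G r j" q] assms by (simp add: shf_def)
  qed
  show "filter_mset (\<lambda>x. x (P, i) = p \<and> x (Q, j) = q) (image_mset (\<lambda>x. shf x m G s r) B)
     = image_mset (\<lambda>x. shf x m G s r) (filter_mset (\<lambda>x. x P = (p + s - G r i) mod s \<and> x Q = (q + s - G r j) mod s) B)"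
    unfolding filter_mset_image_mset by (intro arg_cong[where f="image_mset _"] filter_mset_cong0) (simp add: e1 e2)
  show "filter_mset (\<lambda>x. x (P, i) = p) (image_mset (\<lambda>x. shf x m G s r) B)
     = image_mset (\<lambda>x. shf x m G s r) (filter_mset (\<lambda>x. x P = (p + s - G r i) mod s) B)"
    unfolding filter_mset_image_mset by (intro arg_cong[where f="image_mset _"] filter_mset_cong0) (simp add: e1 e2)
  show "filter_mset (\<lambda>x. x (Q, j) = q) (image_mset (\<lambda>x. shf x m G s r) B)
     = image_mset (\<lambda>x. shf x m G s r) (filter_mset (\<lambda>x. x Q = (q + s - G r j) mod s) B)"
    unfolding filter_mset_image_mset by (intro arg_cong[where f="image_mset _"] filter_mset_cong0) (simp add: e1 e2)
qed

lemma plan_lt: "is_plan s F b k P0 \<Longrightarrow> l < length P0 \<Longrightarrow> A \<in> F \<Longrightarrow> x \<in># P0 ! l \<Longrightarrow> x A < s"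
  unfolding is_plan_def by (meson nth_mem)

lemma N_row:
  assumes pl: "is_plan s F b k P0" and PQ: "P \<in> F" "Q \<in> F" and ij: "i < m" "j < m"
    and G: "\<forall>r<N. G r i < s \<and> G r j < s" and pq: "p < s" "q < s"
  shows "Nmat (diamond s G N m P0) (P, i) (Q, j) p q =
    (\<Sum>r<N. Nmat P0 P Q ((p + s - G r i) mod s) ((q + s - G r j) mod s))"
  unfolding Nmat_def sum_list_diamond
  apply (simp only: sum_list_map_nth)
  apply (rule sum.cong[OF refl])
  apply (rule sum.cong[OF refl])
  apply (subst filt_shift(1))
  using plan_lt[OF pl] PQ ij G pq by auto

lemma L_row:
  assumes pl: "is_plan s F b k P0" and PQ: "P \<in> F" "Q \<in> F" and ij: "i < m" "j < m"
    and G: "\<forall>r<N. G r i < s \<and> G r j < s" and pq: "p < s" "q < s"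
  shows "(\<Sum>l<length (diamond s G N m P0). Lmat (diamond s G N m P0) (P, i) p l * Lmat (diamond s G N m P0) (Q, j) q l) =
    (\<Sum>r<N. \<Sum>l<length P0. Lmat P0 P ((p + s - G r i) mod s) l * Lmat P0 Q ((q + s - G r j) mod s) l)"
proof -
  have "(\<Sum>l<length (diamond s G N m P0). Lmat (diamond s G N m P0) (P, i) p l * Lmat (diamond s G N m P0) (Q, j) q l)
    = sum_list (map (\<lambda>B. size (filter_mset (\<lambda>x. x (P, i) = p) B) * size (filter_mset (\<lambda>x. x (Q, j) = q) B)) (diamond s G N m P0))"
    unfolding sum_list_map_nth Lmat_def by simp
  also have "\<dots> = (\<Sum>r<N. \<Sum>l<length P0. Lmat P0 P ((p + s - G r i) mod s) l * Lmat P0 Q ((q + s - G r j) mod s) l)"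
    unfolding sum_list_diamond Lmat_def
    apply (rule sum.cong[OF refl])
    apply (rule sum.cong[OF refl])
    apply (subst filt_shift(2)[where Q=Q and j=j and q=q])
    using plan_lt[OF pl] PQ ij G pq apply auto[7]
    apply (subst filt_shift(3)[where P=P and i=i and p=p])
    using plan_lt[OF pl] PQ ij G pq by auto
  finally show ?thesis .
qed


lemma part_a_bwd:
  assumes pl: "is_plan s F b k P0" and PQ: "P \<in> F" "Q \<in> F" and ij: "i < m"
    and G: "\<forall>r<N. G r i < s" and O: "OTB s k P0 P Q"
  shows "OTB s k (diamond s G N m P0) (P, i) (Q, i)"
  unfolding OTB_def
proof (intro allI impI)
  fix p q assume pq: "p < s" "q < s"
  have s0: "0 < s" using pq by auto
  have G': "\<forall>r<N. G r i < s \<and> G r i < s" using G by auto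
  show "k * Nmat (diamond s G N m P0) (P, i) (Q, i) p q =
       (\<Sum>l<length (diamond s G N m P0). Lmat (diamond s G N m P0) (P, i) p l * Lmat (diamond s G N m P0) (Q, i) q l)"
    unfolding N_row[where G=G and i=i and j=i, OF pl PQ ij ij G' pq] L_row[where G=G and i=i and j=i, OF pl PQ ij ij G' pq]
    apply (simp add: sum_distrib_left)
    apply (rule sum.cong[OF refl])
    using O s0 unfolding OTB_def by auto
qed

lemma part_a_fwd:
  assumes pl: "is_plan s F b k P0" and PQ: "P \<in> F" "Q \<in> F" and ij: "0 < m"
    and G: "\<forall>r<N. G r 0 = 0" and N0: "0 < N" and O: "OTB s k (diamond s G N m P0) (P, 0) (Q, 0)"
  shows "OTB s k P0 P Q"
  unfolding OTB_def
proof (intro allI impI)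
  fix p q assume pq: "p < s" "q < s"
  have s0: "0 < s" using pq by auto
  have G': "\<forall>r<N. G r 0 < s \<and> G r 0 < s" using G s0 by auto
  have "k * Nmat (diamond s G N m P0) (P, 0) (Q, 0) p q =
       (\<Sum>l<length (diamond s G N m P0). Lmat (diamond s G N m P0) (P, 0) p l * Lmat (diamond s G N m P0) (Q, 0) q l)"
    using O pq unfolding OTB_def by auto
  then have "N * (k * Nmat P0 P Q p q) = N * (\<Sum>l<length P0. Lmat P0 P p l * Lmat P0 Q q l)"
    unfolding N_row[where G=G and i=0 and j=0, OF pl PQ ij ij G' pq] L_row[where G=G and i=0 and j=0, OF pl PQ ij ij G' pq] using G pq
    by (simp add: sum_distrib_left mult.left_commute)
  then show "k * Nmat P0 P Q p q = (\<Sum>l<length P0. Lmat P0 P p l * Lmat P0 Q q l)"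
    using N0 by simp
qed

lemma sum_swap_mset: "(\<Sum>r\<in>R. \<Sum>x\<in>#B. g r x) = (\<Sum>x\<in>#B. \<Sum>r\<in>R. (g r x :: nat))"
  by (induction B) (auto simp: sum.distrib)

lemma sum_ind_card: "(\<Sum>r<(N::nat). if \<Phi> r then 1 else (0::nat)) = card {r. r < N \<and> \<Phi> r}"
proof -
  have "(\<Sum>r<(N::nat). if \<Phi> r then 1 else (0::nat)) = (\<Sum>r<N. of_bool (\<Phi> r))"
    by (rule sum.cong) auto
  also have "\<dots> = card ({..<N} \<inter> {r. \<Phi> r})" by simp
  also have "{..<N} \<inter> {r. \<Phi> r} = {r. r < N \<and> \<Phi> r}" by auto
  finally show ?thesis .
qed

lemma dep_lemma:
  assumes "size B = k" and "(\<exists>\<phi>. \<forall>x\<in>#B. \<forall>y\<in>#B. c x y = \<phi> x) \<or> (\<exists>\<psi>. \<forall>x\<in>#B. \<forall>y\<in>#B. c x y = \<psi> y)"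
  shows "k * (\<Sum>x\<in>#B. c x x) = (\<Sum>x\<in>#B. \<Sum>y\<in>#B. (c x y :: nat))"
  using assms(2)
proof
  assume "\<exists>\<phi>. \<forall>x\<in>#B. \<forall>y\<in>#B. c x y = \<phi> x"
  then obtain \<phi> where h: "\<forall>x\<in>#B. \<forall>y\<in>#B. c x y = \<phi> x" by blast
  have "(\<Sum>x\<in>#B. \<Sum>y\<in>#B. c x y) = (\<Sum>x\<in>#B. \<Sum>y\<in>#B. \<phi> x)"
    using h by (intro arg_cong[where f=sum_mset] image_mset_cong) simp
  also have "\<dots> = (\<Sum>x\<in>#B. k * \<phi> x)" using assms(1) by simp
  also have "\<dots> = k * (\<Sum>x\<in>#B. c x x)" using h by (simp add: sum_mset_distrib_left cong: image_mset_cong)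
  finally show ?thesis by simp
next
  assume "\<exists>\<psi>. \<forall>x\<in>#B. \<forall>y\<in>#B. c x y = \<psi> y"
  then obtain \<psi> where h: "\<forall>x\<in>#B. \<forall>y\<in>#B. c x y = \<psi> y" by blast
  have "(\<Sum>x\<in>#B. \<Sum>y\<in>#B. c x y) = (\<Sum>x\<in>#B. \<Sum>y\<in>#B. \<psi> y)"
    using h by (intro arg_cong[where f=sum_mset] image_mset_cong) simp
  also have "\<dots> = k * (\<Sum>y\<in>#B. \<psi> y)" using assms(1) by simp
  also have "\<dots> = k * (\<Sum>x\<in>#B. c x x)" using h by (simp cong: image_mset_cong)
  finally show ?thesis by simp
qed


lemma blk1: "(\<Sum>r<(N::nat). size (filter_mset (\<lambda>x. x P = a r \<and> x Q = c r) B))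
   = (\<Sum>x\<in>#B. \<Sum>r<N. if x P = a r \<and> x Q = c r then 1 else (0::nat))"
  by (simp add: size_filter_sum sum_swap_mset)

lemma blk2: "(\<Sum>r<(N::nat). size (filter_mset (\<lambda>x. x P = a r) B) * size (filter_mset (\<lambda>x. x Q = c r) B))
   = (\<Sum>x\<in>#B. \<Sum>y\<in>#B. \<Sum>r<N. if x P = a r \<and> y Q = c r then 1 else (0::nat))"
proof -
  have "(\<Sum>r<(N::nat). size (filter_mset (\<lambda>x. x P = a r) B) * size (filter_mset (\<lambda>x. x Q = c r) B))
     = (\<Sum>r<N. \<Sum>x\<in>#B. \<Sum>y\<in>#B. (if x P = a r then 1 else (0::nat)) * (if y Q = c r then 1 else 0))"
    by (simp only: size_filter_sum sum_mset_distrib_right) (simp only: sum_mset_distrib_left)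
  also have "\<dots> = (\<Sum>x\<in>#B. \<Sum>r<N. \<Sum>y\<in>#B. (if x P = a r then 1 else (0::nat)) * (if y Q = c r then 1 else 0))"
    by (rule sum_swap_mset)
  also have "\<dots> = (\<Sum>x\<in>#B. \<Sum>y\<in>#B. \<Sum>r<N. (if x P = a r then 1 else (0::nat)) * (if y Q = c r then 1 else 0))"
    by (simp only: sum_swap_mset)
  also have "\<dots> = (\<Sum>x\<in>#B. \<Sum>y\<in>#B. \<Sum>r<N. if x P = a r \<and> y Q = c r then 1 else (0::nat))"
    by (intro arg_cong[where f=sum_mset] image_mset_cong sum.cong refl) auto
  finally show ?thesis .
qed

definition cnt :: "nat \<Rightarrow> nat \<Rightarrow> (nat \<Rightarrow> nat \<Rightarrow> nat) \<Rightarrow> nat \<Rightarrow> nat \<Rightarrow> 'f \<Rightarrow> 'f \<Rightarrow> nat \<Rightarrow> nat \<Rightarrow> 'f run \<Rightarrow> 'f run \<Rightarrow> nat" where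
  "cnt s N G i j P Q p q x y = (\<Sum>r<N. if x P = (p + s - G r i) mod s \<and> y Q = (q + s - G r j) mod s then 1 else 0)"

lemma part_b_gen:
  assumes pl: "is_plan s F b k P0" and PQ: "P \<in> F" "Q \<in> F" and ij: "i < m" "j < m"
    and G: "\<forall>r<N. G r i < s \<and> G r j < s"
    and dep: "\<forall>p<s. \<forall>q<s. \<forall>l<length P0.
       (\<exists>\<phi>. \<forall>x\<in>#P0!l. \<forall>y\<in>#P0!l. cnt s N G i j P Q p q x y = \<phi> x) \<or>
       (\<exists>\<psi>. \<forall>x\<in>#P0!l. \<forall>y\<in>#P0!l. cnt s N G i j P Q p q x y = \<psi> y)"
  shows "OTB s k (diamond s G N m P0) (P, i) (Q, j)"
  unfolding OTB_def
proof (intro allI impI)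
  fix p q assume pq: "p < s" "q < s"
  define a where "a r = (p + s - G r i) mod s" for r
  define c where "c r = (q + s - G r j) mod s" for r
  have cnt_eq: "cnt s N G i j P Q p q x = (\<lambda>y. \<Sum>r<N. if x P = (p + s - G r i) mod s \<and> y Q = (q + s - G r j) mod s then 1 else 0)" for x
    by (rule ext) (simp add: cnt_def)
  have "k * Nmat (diamond s G N m P0) (P, i) (Q, j) p q
      = k * (\<Sum>r<N. \<Sum>l<length P0. size (filter_mset (\<lambda>x. x P = a r \<and> x Q = c r) (P0 ! l)))"
    apply (subst N_row[where G=G and i=i and j=j, OF pl PQ ij G pq])
    unfolding a_def c_def Nmat_def sum_list_map_nth ..
  also have "\<dots> = k * (\<Sum>l<length P0. (\<Sum>x\<in>#P0!l. cnt s N G i j P Q p q x x))"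
    apply (subst sum.swap)
    by (simp add: blk1 cnt_def a_def c_def)
  also have "\<dots> = (\<Sum>l<length P0. k * (\<Sum>x\<in>#P0!l. cnt s N G i j P Q p q x x))"
    by (simp add: sum_distrib_left)
  also have "\<dots> = (\<Sum>l<length P0. (\<Sum>x\<in>#P0!l. \<Sum>y\<in>#P0!l. cnt s N G i j P Q p q x y))"
    apply (rule sum.cong[OF refl])
    apply (rule dep_lemma)
    using pl dep pq unfolding is_plan_def by auto
  also have "\<dots> = (\<Sum>r<N. \<Sum>l<length P0. Lmat P0 P (a r) l * Lmat P0 Q (c r) l)"
    apply (subst sum.swap)
    apply (rule sum.cong[OF refl])
    by (simp add: blk2 cnt_eq a_def c_def Lmat_def)
  also have "\<dots> = (\<Sum>l<length (diamond s G N m P0). Lmat (diamond s G N m P0) (P, i) p l * Lmat (diamond s G N m P0) (Q, j) q l)"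
    unfolding L_row[where G=G and i=i and j=j, OF pl PQ ij G pq] a_def c_def ..
  finally show "k * Nmat (diamond s G N m P0) (P, i) (Q, j) p q = (\<Sum>l<length (diamond s G N m P0). Lmat (diamond s G N m P0) (P, i) p l * Lmat (diamond s G N m P0) (Q, j) q l)" .
qed


lemma cnt_card:
  assumes "x P < s" "y Q < s" "p < s" "q < s" "\<forall>r<N. G r i < s \<and> G r j < s"
  shows "cnt s N G i j P Q p q x y = card {r. r < N \<and> G r i = (p + s - x P) mod s \<and> G r j = (q + s - y Q) mod s}"
proof -
  have "cnt s N G i j P Q p q x y = card {r. r < N \<and> (x P = (p + s - G r i) mod s \<and> y Q = (q + s - G r j) mod s)}"
    unfolding cnt_def by (rule sum_ind_card)
  also have "{r. r < N \<and> (x P = (p + s - G r i) mod s \<and> y Q = (q + s - G r j) mod s)}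
      = {r. r < N \<and> G r i = (p + s - x P) mod s \<and> G r j = (q + s - y Q) mod s}"
  proof (rule Collect_cong)
    fix r
    show "(r < N \<and> (x P = (p + s - G r i) mod s \<and> y Q = (q + s - G r j) mod s)) =
          (r < N \<and> G r i = (p + s - x P) mod s \<and> G r j = (q + s - y Q) mod s)"
    proof (cases "r < N")
      case True
      then show ?thesis
        using modeq[of "x P" s "G r i" p] modeq[of "y Q" s "G r j" q] assms by auto
    qed simp
  qed
  finally show ?thesis .
qed

theorem theorem4p1:
  fixes s t b k N m :: nat and F :: "'f set" and P0 :: "'f plan"
    and H :: "nat \<Rightarrow> nat \<Rightarrow> nat"
  assumes "0 < s"
    and "finite F" and "card F = t"
    and "is_plan s F b k P0"
    and "1 \<le> m"
    and "is_OA N (m - 1) s H"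
  shows "is_plan s (F \<times> {0..<m}) (b * N) k (diamond s (Qarr H) N m P0)
    \<and> card (F \<times> {0..<m}) = m * t
    \<and> (\<forall>P\<in>F. \<forall>Q'\<in>F. P \<noteq> Q' \<longrightarrow>
          ((\<forall>i<m. OTB s k (diamond s (Qarr H) N m P0) (P, i) (Q', i)) \<longleftrightarrow> OTB s k P0 P Q'))
    \<and> (\<forall>P\<in>F. \<forall>Q'\<in>F. \<forall>i<m. \<forall>j<m. i \<noteq> j \<longrightarrow>
          OTB s k (diamond s (Qarr H) N m P0) (P, i) (Q', j))"
proof -
  note s0 = assms(1) and pl = assms(4) and OA = assms(6)
  define G where "G = Qarr H"
  have N0: "0 < N" using OA unfolding is_OA_def by auto
  have Hlt: "\<And>r j. r < N \<Longrightarrow> j < m - 1 \<Longrightarrow> H r j < s" using OA unfolding is_OA_def by auto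
  have c1: "\<And>j p. j < m - 1 \<Longrightarrow> p < s \<Longrightarrow> card {r. r < N \<and> H r j = p} * s = N"
    using OA unfolding is_OA_def by auto
  have c2: "\<And>j1 j2 p q. j1 < m - 1 \<Longrightarrow> j2 < m - 1 \<Longrightarrow> j1 \<noteq> j2 \<Longrightarrow> p < s \<Longrightarrow> q < s \<Longrightarrow>
      card {r. r < N \<and> H r j1 = p \<and> H r j2 = q} * s^2 = N"
    using OA unfolding is_OA_def by auto
  have G0: "\<forall>r<N. G r 0 = 0" unfolding G_def Qarr_def by auto
  have Glt: "\<And>i. i < m \<Longrightarrow> \<forall>r<N. G r i < s"
    unfolding G_def Qarr_def using Hlt s0 by auto
  have Gpos: "\<And>i r. 0 < i \<Longrightarrow> G r i = H r (i - 1)" unfolding G_def Qarr_def by auto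
  have part1: "is_plan s (F \<times> {0..<m}) (b * N) k (diamond s G N m P0)"
  proof -
    have len: "length (diamond s G N m P0) = b * N"
      using pl unfolding is_plan_def by (simp add: length_diamond)
    have "\<forall>B\<in>set (diamond s G N m P0). size B = k \<and> (\<forall>x\<in>#B. \<forall>A\<in>F \<times> {0..<m}. x A < s)"
      using pl s0 unfolding is_plan_def diamond_def by auto
    then show ?thesis using len unfolding is_plan_def by blast
  qed
  have part2: "card (F \<times> {0..<m}) = m * t"
    using assms(2,3) by (simp add: card_cartesian_product)
  have part3: "(\<forall>i<m. OTB s k (diamond s G N m P0) (P, i) (Q', i)) \<longleftrightarrow> OTB s k P0 P Q'"
    if PQ: "P \<in> F" "Q' \<in> F" for P Q'
  proof
    assume "\<forall>i<m. OTB s k (diamond s G N m P0) (P, i) (Q', i)"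
    then show "OTB s k P0 P Q'"
      using part_a_fwd[where G=G and m=m, OF pl PQ _ G0 N0] assms(5) by auto
  next
    assume "OTB s k P0 P Q'"
    then show "\<forall>i<m. OTB s k (diamond s G N m P0) (P, i) (Q', i)"
      using part_a_bwd[where G=G and m=m, OF pl PQ] Glt by auto
  qed
  have part4: "OTB s k (diamond s G N m P0) (P, i) (Q', j)"
    if PQ: "P \<in> F" "Q' \<in> F" and ij: "i < m" "j < m" "i \<noteq> j" for P Q' i j
  proof (rule part_b_gen[OF pl PQ ij(1,2)])
    show Gb: "\<forall>r<N. G r i < s \<and> G r j < s" using Glt ij by auto
    show "\<forall>p<s. \<forall>q<s. \<forall>l<length P0.
       (\<exists>\<phi>. \<forall>x\<in>#P0!l. \<forall>y\<in>#P0!l. cnt s N G i j P Q' p q x y = \<phi> x) \<or>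
       (\<exists>\<psi>. \<forall>x\<in>#P0!l. \<forall>y\<in>#P0!l. cnt s N G i j P Q' p q x y = \<psi> y)"
    proof (intro allI impI)
      fix p q l assume pq: "p < s" "q < s" and l: "l < length P0"
      have cc: "\<And>x y. x \<in># P0!l \<Longrightarrow> y \<in># P0!l \<Longrightarrow> cnt s N G i j P Q' p q x y =
          card {r. r < N \<and> G r i = (p + s - x P) mod s \<and> G r j = (q + s - y Q') mod s}"
      proof -
        fix x y assume "x \<in># P0!l" "y \<in># P0!l"
        then have "x P < s" "y Q' < s" using plan_lt[OF pl l] PQ by auto
        then show "cnt s N G i j P Q' p q x y =
          card {r. r < N \<and> G r i = (p + s - x P) mod s \<and> G r j = (q + s - y Q') mod s}"
          by (rule cnt_card[OF _ _ pq Gb])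
      qed
      have md: "\<And>a c. (a + s - c) mod s < s" using s0 by auto
      show "(\<exists>\<phi>. \<forall>x\<in>#P0!l. \<forall>y\<in>#P0!l. cnt s N G i j P Q' p q x y = \<phi> x) \<or>
       (\<exists>\<psi>. \<forall>x\<in>#P0!l. \<forall>y\<in>#P0!l. cnt s N G i j P Q' p q x y = \<psi> y)"
      proof (cases "i = 0")
        case True
        then have j: "0 < j" using ij by auto
        have "\<forall>x\<in>#P0!l. \<forall>y\<in>#P0!l. cnt s N G i j P Q' p q x y =
            (if (p + s - x P) mod s = 0 then N div s else 0)"
        proof (intro ballI)
          fix x y assume xy: "x \<in># P0!l" "y \<in># P0!l"
          show "cnt s N G i j P Q' p q x y = (if (p + s - x P) mod s = 0 then N div s else 0)"
          proof (cases "(p + s - x P) mod s = 0")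
            case True
            have "{r. r < N \<and> G r i = (p + s - x P) mod s \<and> G r j = (q + s - y Q') mod s}
                = {r. r < N \<and> H r (j - 1) = (q + s - y Q') mod s}"
              (is "?A = ?B") using G0 Gpos[OF j] True \<open>i = 0\<close> by auto
            moreover have X: "card ?B * s = N"
              using c1[of "j - 1" "(q + s - y Q') mod s", OF _ md] ij j by simp
            moreover have "N div s = card ?B"
              proof -
              have "card ?B * s div s = card ?B" using s0 by simp
              then show ?thesis by (simp only: X)
            qed
            ultimately show ?thesis using cc[OF xy] True by simp
          next
            case False
            have "{r. r < N \<and> G r i = (p + s - x P) mod s \<and> G r j = (q + s - y Q') mod s} = {}"
              using G0 False \<open>i = 0\<close> by auto
            then show ?thesis using cc[OF xy] False by simp
          qed
        qed
        then show ?thesis by (intro disjI1 exI[where x="\<lambda>x. if (p + s - x P) mod s = 0 then N div s else 0"])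
      next
        case i: False
        show ?thesis
        proof (cases "j = 0")
          case True
          have "\<forall>x\<in>#P0!l. \<forall>y\<in>#P0!l. cnt s N G i j P Q' p q x y =
              (if (q + s - y Q') mod s = 0 then N div s else 0)"
          proof (intro ballI)
            fix x y assume xy: "x \<in># P0!l" "y \<in># P0!l"
            show "cnt s N G i j P Q' p q x y = (if (q + s - y Q') mod s = 0 then N div s else 0)"
            proof (cases "(q + s - y Q') mod s = 0")
              case True
              have "{r. r < N \<and> G r i = (p + s - x P) mod s \<and> G r j = (q + s - y Q') mod s}
                  = {r. r < N \<and> H r (i - 1) = (p + s - x P) mod s}"
                (is "?A = ?B") using G0 Gpos i True \<open>j = 0\<close> by auto
              moreover have X: "card ?B * s = N"
                using c1[of "i - 1" "(p + s - x P) mod s", OF _ md] ij i by simp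
              moreover have "N div s = card ?B"
                proof -
              have "card ?B * s div s = card ?B" using s0 by simp
              then show ?thesis by (simp only: X)
            qed
              ultimately show ?thesis using cc[OF xy] True by simp
            next
              case False
              have "{r. r < N \<and> G r i = (p + s - x P) mod s \<and> G r j = (q + s - y Q') mod s} = {}"
                using G0 False \<open>j = 0\<close> by auto
              then show ?thesis using cc[OF xy] False by simp
            qed
          qed
          then show ?thesis by (intro disjI2 exI[where x="\<lambda>y. if (q + s - y Q') mod s = 0 then N div s else 0"])
        next
          case j: False
          have "\<forall>x\<in>#P0!l. \<forall>y\<in>#P0!l. cnt s N G i j P Q' p q x y = N div s^2"
          proof (intro ballI)
            fix x y assume xy: "x \<in># P0!l" "y \<in># P0!l"
            have "{r. r < N \<and> G r i = (p + s - x P) mod s \<and> G r j = (q + s - y Q') mod s}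
                = {r. r < N \<and> H r (i - 1) = (p + s - x P) mod s \<and> H r (j - 1) = (q + s - y Q') mod s}"
              (is "?A = ?B") using Gpos i j by auto
            moreover have X: "card ?B * s^2 = N"
              using c2[of "i - 1" "j - 1" "(p + s - x P) mod s" "(q + s - y Q') mod s", OF _ _ _ md md] ij i j by simp
            moreover have "N div s^2 = card ?B"
              proof -
              have "card ?B * s^2 div s^2 = card ?B" using s0 by simp
              then show ?thesis by (simp only: X)
            qed
            ultimately show "cnt s N G i j P Q' p q x y = N div s^2" using cc[OF xy] by simp
          qed
          then show ?thesis by (intro disjI1 exI[where x="\<lambda>x. N div s^2"])
        qed
      qed
    qed
  qed
  show ?thesis
    using part1 part2 part3 part4 unfolding G_def by blast
qed

end
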